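(* Let $m$ be an odd positive integer and $n$ a positive integer. Then there is no non-symmetric tensor $\mathbb{A}\in T_{m,n}$ that is a $P$ tensor.
   Context: $T_{m,n}$ denotes the set of real $m$th order $n$-dimensional tensors $\mathbb{A}=(a_{i_1i_2\ldots i_m})$ with $i_j\in[n]=\{1,\ldots,n\}$. A tensor is symmetric if its entries $a_{i_1\ldots i_m}$ are invariant under any permutation of the indices $i_1,\ldots,i_m$. For $x\in\mathbb{R}^n$, $(\mathbb{A}x^{m-1})_i=\sum_{i_2,\ldots,i_m=1}^n a_{ii_2\ldots i_m}x_{i_2}\cdots x_{i_m}$, $i\in[n]$. A tensor $\mathbb{A}\in T_{m,n}$ is a $P$ tensor if for every nonzero $x\in\mathbb{R}^n$, $\max_{i\in[n]} x_i(\mathbb{A}x^{m-1})_i>0$. *)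

theory Defs
  imports Complex_Main "HOL-Library.Multiset"
begin

text \<open>A real tensor of order m and dimension n is modelled as a function from index
lists to reals; only index lists of length m with entries in {0..<n} are relevant
(indices are 0-based, i.e. [n] is rendered as {0..<n}).\<close>

definition idx :: "nat \<Rightarrow> nat \<Rightarrow> nat list set" where
  "idx k n = {is. length is = k \<and> set is \<subseteq> {0..<n}}"

text \<open>Symmetric: entries invariant under any permutation of the m indices
(two index lists are permutations of each other iff they have equal multisets).\<close>
definition sym_tensor :: "nat \<Rightarrow> nat \<Rightarrow> (nat list \<Rightarrow> real) \<Rightarrow> bool" where
  "sym_tensor m n A \<longleftrightarrow>
     (\<forall>is \<in> idx m n. \<forall>js. mset js = mset is \<longrightarrow> A js = A is)"

definition tensor_apply :: "nat \<Rightarrow> nat \<Rightarrow> (nat list \<Rightarrow> real) \<Rightarrow> (nat \<Rightarrow> real) \<Rightarrow> nat \<Rightarrow> real" where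
  "tensor_apply m n A x i = (\<Sum>js \<in> idx (m - 1) n. A (i # js) * (\<Prod>j \<leftarrow> js. x j))"

definition P_tensor :: "nat \<Rightarrow> nat \<Rightarrow> (nat list \<Rightarrow> real) \<Rightarrow> bool" where
  "P_tensor m n A \<longleftrightarrow>
     (\<forall>x :: nat \<Rightarrow> real. (\<exists>i<n. x i \<noteq> 0) \<longrightarrow>
        Max ((\<lambda>i. x i * tensor_apply m n A x i) ` {0..<n}) > 0)"

end

theory Submission
  imports Defs
begin

lemma prod_neg_even:
  fixes x :: "nat \<Rightarrow> real"
  shows "(\<Prod>j \<leftarrow> js. - x j) = (-1) ^ length js * (\<Prod>j \<leftarrow> js. x j)"
  by (induction js) auto

lemma tensor_apply_neg:
  assumes "odd m" "m > 0"
  shows "tensor_apply m n A (\<lambda>i. - x i) i = tensor_apply m n A x i"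
  unfolding tensor_apply_def
proof (rule sum.cong[OF refl])
  fix js assume "js \<in> idx (m - 1) n"
  then have "length js = m - 1" by (simp add: idx_def)
  moreover have "even (m - 1)" using assms by simp
  ultimately show "A (i # js) * (\<Prod>j \<leftarrow> js. - x j) = A (i # js) * (\<Prod>j \<leftarrow> js. x j)"
    by (simp add: prod_neg_even)
qed

theorem corollary2p2:
  fixes m n :: nat
  assumes "odd m" and "m > 0" and "n > 0"
  shows "\<not> (\<exists>A :: nat list \<Rightarrow> real. \<not> sym_tensor m n A \<and> P_tensor m n A)"
proof
  assume "\<exists>A :: nat list \<Rightarrow> real. \<not> sym_tensor m n A \<and> P_tensor m n A"
  then obtain A where P: "P_tensor m n A" by blast
  define e :: "nat \<Rightarrow> real" where "e = (\<lambda>i. if i = 0 then 1 else 0)"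
  define c where "c = tensor_apply m n A e 0"
  have ne: "\<exists>i<n. y i \<noteq> 0" if "y = e \<or> y = (\<lambda>i. - e i)" for y
    using that assms(3) by (auto simp: e_def intro!: exI[of _ 0])
  have key: "Max ((\<lambda>i. y i * tensor_apply m n A y i) ` {0..<n}) \<le> 0"
    if y: "y = e \<or> y = (\<lambda>i. - e i)" and s: "y 0 * c \<le> 0" for y
  proof -
    have "\<forall>i\<in>{0..<n}. y i * tensor_apply m n A y i \<le> 0"
    proof
      fix i assume "i \<in> {0..<n}"
      show "y i * tensor_apply m n A y i \<le> 0"
      proof (cases "i = 0")
        case True
        have "tensor_apply m n A y 0 = c"
          using y tensor_apply_neg[OF assms(1,2), of n A e 0] by (auto simp: c_def)
        then show ?thesis using True s by simp
      next
        case False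
        then show ?thesis using y by (auto simp: e_def)
      qed
    qed
    then show ?thesis using assms(3) by (simp add: Max_le_iff)
  qed
  show False
  proof (cases "c \<ge> 0")
    case True
    have "Max ((\<lambda>i. (- e i) * tensor_apply m n A (\<lambda>i. - e i) i) ` {0..<n}) \<le> 0"
      using key[of "\<lambda>i. - e i"] True by (simp add: e_def)
    moreover have "Max ((\<lambda>i. (- e i) * tensor_apply m n A (\<lambda>i. - e i) i) ` {0..<n}) > 0"
      using spec[OF P[unfolded P_tensor_def], of "\<lambda>i. - e i"] ne[of "\<lambda>i. - e i"] by simp
    ultimately show False by simp
  next
    case False
    have "Max ((\<lambda>i. e i * tensor_apply m n A e i) ` {0..<n}) \<le> 0"
      using key[of e] False by (simp add: e_def)
    moreover have "Max ((\<lambda>i. e i * tensor_apply m n A e i) ` {0..<n}) > 0"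
      using spec[OF P[unfolded P_tensor_def], of e] ne[of e] by simp
    ultimately show False by simp
  qed
qed

end
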